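(* Let $S$ be a cyclotomic numerical semigroup. Then \[ \mathrm P_S(x)=\prod_{d\in\mathcal D}\Phi_d(x)^{e_d}, \] where $\mathcal D=\{d_1,\ldots,d_s\}$ is a finite set of positive integers and the exponents $e_d$ are positive integers. Furthermore, all elements of $\mathcal D$ are composite.
   Context: A numerical semigroup is a submonoid $S$ of $(\mathbb N,+)$ with $\mathbb N\setminus S$ finite; its semigroup polynomial is $\mathrm P_S(x)=(1-x)\sum_{s\in S}x^s$ (a monic polynomial with integer coefficients). A Kronecker polynomial is a monic polynomial with integer coefficients all of whose complex roots lie in the closed unit disc. $S$ is called cyclotomic if $\mathrm P_S$ is a Kronecker polynomial. $\Phi_n$ denotes the $n$-th cyclotomic polynomial. *)

theory Defs
  imports "HOL-Computational_Algebra.Computational_Algebra" "HOL-Analysis.Analysis"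
begin

definition numerical_semigroup :: "nat set \<Rightarrow> bool" where
  "numerical_semigroup S \<longleftrightarrow> 0 \<in> S \<and> (\<forall>a\<in>S. \<forall>b\<in>S. a + b \<in> S) \<and> finite (UNIV - S)"

definition semigroup_poly :: "nat set \<Rightarrow> int poly" where
  "semigroup_poly S = (THE p. fps_of_poly p = (1 - fps_X) * Abs_fps (\<lambda>n. if n \<in> S then 1 else 0))"

definition kronecker_poly :: "int poly \<Rightarrow> bool" where
  "kronecker_poly p \<longleftrightarrow> lead_coeff p = 1 \<and>
     (\<forall>z::complex. poly (map_poly of_int p) z = 0 \<longrightarrow> norm z \<le> 1)"

definition cyclotomic_semigroup :: "nat set \<Rightarrow> bool" where
  "cyclotomic_semigroup S \<longleftrightarrow> numerical_semigroup S \<and> kronecker_poly (semigroup_poly S)"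

definition cyclo :: "nat \<Rightarrow> complex poly" where
  "cyclo n = (\<Prod>k\<in>{k. 1 \<le> k \<and> k \<le> n \<and> coprime k n}. [:- cis (2 * pi * real k / real n), 1:])"

definition composite :: "nat \<Rightarrow> bool" where
  "composite n \<longleftrightarrow> n > 1 \<and> \<not> prime n"

end

theory Submission
  imports Defs
begin


lemma mpi_add: "map_poly (of_int :: int \<Rightarrow> 'a::comm_ring_1) (p + q) = map_poly of_int p + map_poly of_int q"
  by (rule poly_eqI) (simp add: coeff_map_poly)
lemma mpi_diff: "map_poly (of_int :: int \<Rightarrow> 'a::comm_ring_1) (p - q) = map_poly of_int p - map_poly of_int q"
  by (rule poly_eqI) (simp add: coeff_map_poly)
lemma mpi_minus: "map_poly (of_int :: int \<Rightarrow> 'a::comm_ring_1) (- p) = - map_poly of_int p"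
  by (rule poly_eqI) (simp add: coeff_map_poly)
lemma mpi_mult: "map_poly (of_int :: int \<Rightarrow> 'a::comm_ring_1) (p * q) = map_poly of_int p * map_poly of_int q"
  by (rule poly_eqI) (simp add: coeff_map_poly coeff_mult of_int_sum)
lemma mpi_1: "map_poly (of_int :: int \<Rightarrow> 'a::comm_ring_1) 1 = 1"
  by simp
lemma mpi_const: "map_poly (of_int :: int \<Rightarrow> 'a::comm_ring_1) [:c:] = [:of_int c:]"
  by (rule poly_eqI) (simp add: coeff_map_poly coeff_pCons split: nat.splits)
lemma mpi_power: "map_poly (of_int :: int \<Rightarrow> 'a::comm_ring_1) (p ^ n) = map_poly of_int p ^ n"
  by (induction n) (simp_all add: mpi_mult)
lemma mpi_smult: "map_poly (of_int :: int \<Rightarrow> 'a::comm_ring_1) (smult c p) = smult (of_int c) (map_poly of_int p)"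
  by (rule poly_eqI) (simp add: coeff_map_poly)
lemma mpi_monom: "map_poly (of_int :: int \<Rightarrow> 'a::comm_ring_1) (monom c n) = monom (of_int c) n"
  by (simp add: map_poly_monom)
lemma mpi_pderiv: "map_poly (of_int :: int \<Rightarrow> 'a::idom) (pderiv p) = pderiv (map_poly of_int p)"
  by (rule poly_eqI) (simp add: coeff_map_poly coeff_pderiv)
lemma mpi_sum: "map_poly (of_int :: int \<Rightarrow> 'a::comm_ring_1) (sum f A) = (\<Sum>x\<in>A. map_poly of_int (f x))"
  by (induction A rule: infinite_finite_induct) (simp_all add: mpi_add)
lemma mpi_eq_iff: "map_poly (of_int :: int \<Rightarrow> 'a::ring_char_0) p = map_poly of_int q \<longleftrightarrow> p = q"
  by (auto simp: poly_eq_iff coeff_map_poly)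
lemma mpi_eq_0_iff: "map_poly (of_int :: int \<Rightarrow> 'a::ring_char_0) p = 0 \<longleftrightarrow> p = 0"
  using mpi_eq_iff[of p 0] by simp
lemma mpi_degree: "degree (map_poly (of_int :: int \<Rightarrow> 'a::ring_char_0) p) = degree p"
  by (rule degree_map_poly) simp
lemma mpi_lead: "lead_coeff (map_poly (of_int :: int \<Rightarrow> 'a::ring_char_0) p) = of_int (lead_coeff p)"
  by (simp add: mpi_degree coeff_map_poly)
lemma mpi_pcompose: "map_poly (of_int :: int \<Rightarrow> 'a::comm_ring_1) (pcompose p q) = pcompose (map_poly of_int p) (map_poly of_int q)"
proof (induction p rule: pCons_induct)
  case (pCons a p)
  show ?case
    by (simp add: pcompose_pCons mpi_add mpi_mult mpi_const map_poly_pCons pCons.IH)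
qed simp

lemma mpr_add: "map_poly (of_rat :: rat \<Rightarrow> 'a::field_char_0) (p + q) = map_poly of_rat p + map_poly of_rat q"
  by (rule poly_eqI) (simp add: coeff_map_poly of_rat_add)
lemma mpr_diff: "map_poly (of_rat :: rat \<Rightarrow> 'a::field_char_0) (p - q) = map_poly of_rat p - map_poly of_rat q"
  by (rule poly_eqI) (simp add: coeff_map_poly of_rat_diff)
lemma mpr_mult: "map_poly (of_rat :: rat \<Rightarrow> 'a::field_char_0) (p * q) = map_poly of_rat p * map_poly of_rat q"
  by (rule poly_eqI) (simp add: coeff_map_poly coeff_mult of_rat_sum of_rat_mult)
lemma mpr_smult: "map_poly (of_rat :: rat \<Rightarrow> 'a::field_char_0) (smult c p) = smult (of_rat c) (map_poly of_rat p)"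
  by (rule poly_eqI) (simp add: coeff_map_poly of_rat_mult)
lemma mpr_of_int: "map_poly (of_rat :: rat \<Rightarrow> 'a::field_char_0) (map_poly of_int p) = map_poly of_int p"
  by (rule poly_eqI) (simp add: coeff_map_poly)


lemma ld_mult:
  fixes A B P Q :: "complex fps"
  assumes "fps_deriv A = A * P" "fps_deriv B = B * Q"
  shows "fps_deriv (A * B) = (A * B) * (P + Q)"
  using assms by (simp add: fps_deriv_mult algebra_simps mult_ac)

lemma ld_power:
  fixes A P :: "complex fps"
  assumes "fps_deriv A = A * P"
  shows "fps_deriv (A ^ n) = A ^ n * (fps_const (of_nat n) * P)"
proof (induction n)
  case 0 then show ?case by simp
next
  case (Suc n)
  have "fps_deriv (A ^ n * A) = (A ^ n * A) * (fps_const (of_nat n) * P + P)"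
    by (rule ld_mult[OF Suc assms])
  moreover have "fps_const (of_nat n) * P + P = fps_const (of_nat (Suc n)) * P"
    by (simp add: algebra_simps fps_const_add[symmetric])
  ultimately show ?case by (simp add: mult.commute del: power_Suc add: power_Suc2)
qed

lemma ld_prod:
  fixes A P :: "'b \<Rightarrow> complex fps"
  assumes "finite R" "\<And>z. z \<in> R \<Longrightarrow> fps_deriv (A z) = A z * P z"
  shows "fps_deriv (\<Prod>z\<in>R. A z) = (\<Prod>z\<in>R. A z) * (\<Sum>z\<in>R. P z)"
  using assms
proof (induction R rule: finite_induct)
  case empty then show ?case by simp
next
  case (insert x F)
  have "fps_deriv (A x * (\<Prod>z\<in>F. A z)) = (A x * (\<Prod>z\<in>F. A z)) * (P x + (\<Sum>z\<in>F. P z))"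
    by (rule ld_mult) (use insert in auto)
  then show ?case using insert by simp
qed

lemma ld_lin:
  fixes z :: complex
  shows "fps_deriv (1 - fps_const z * fps_X) = (1 - fps_const z * fps_X) * Abs_fps (\<lambda>n. - (z ^ (n+1)))"
proof -
  define F where "F = Abs_fps (\<lambda>n. - (z ^ (n+1)))"
  have l: "fps_deriv (1 - fps_const z * fps_X) = - fps_const z"
    by simp
  have r: "(1 - fps_const z * fps_X) * F = F - fps_const z * (fps_X * F)"
    by (simp add: algebra_simps)
  have "F - fps_const z * (fps_X * F) = - fps_const z"
  proof (rule fps_ext)
    fix n
    show "(F - fps_const z * (fps_X * F)) $ n = (- fps_const z) $ n"
    proof (cases n)
      case 0 then show ?thesis by (simp add: F_def fps_X_mult_nth)
    next
      case (Suc k) then show ?thesis by (simp add: F_def fps_X_mult_nth)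
    qed
  qed
  then show ?thesis using l r by (simp add: F_def)
qed

lemma reflect_lin: "reflect_poly [:a, 1:] = [:1, a::complex:]"
  by (rule poly_eqI) (auto simp: coeff_reflect_poly coeff_pCons split: nat.splits)

lemma power_sums_int:
  fixes f :: "complex poly"
  assumes lead: "lead_coeff f = 1" and ints: "\<And>i. coeff f i \<in> \<int>"
  shows "(\<Sum>z | poly f z = 0. of_nat (order z f) * z ^ k) \<in> \<int>"
proof -
  define R where "R = {z. poly f z = 0}"
  have f0: "f \<noteq> 0" using lead by auto
  have finR: "finite R" unfolding R_def using f0 by (rule poly_roots_finite)
  have fdec: "f = (\<Prod>z\<in>R. [:-z,1:] ^ order z f)"
    using complex_poly_decompose[of f] lead by (simp add: R_def)
  define A where "A = fps_of_poly (reflect_poly f)"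
  have refl: "reflect_poly f = (\<Prod>z\<in>R. [:1,-z:] ^ order z f)"
    by (subst fdec) (simp add: reflect_poly_prod reflect_poly_power reflect_lin)
  have lin: "fps_of_poly [:1,-z:] = 1 - fps_const z * fps_X" for z :: complex
  proof -
    have "fps_of_poly [:1,-z:] = fps_const 1 + (fps_const (-z) + 0 * fps_X) * fps_X"
      by (simp only: fps_of_poly_pCons fps_of_poly_0)
    also have "\<dots> = 1 - fps_const z * fps_X"
      by (simp add: mult.commute)
    finally show ?thesis .
  qed
  have A_prod: "A = (\<Prod>z\<in>R. (1 - fps_const z * fps_X) ^ order z f)"
    unfolding A_def refl by (simp add: fps_of_poly_prod fps_of_poly_power lin)
  define P where "P = (\<Sum>z\<in>R. fps_const (of_nat (order z f)) * Abs_fps (\<lambda>n. - (z ^ (n+1))))"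
  have dA: "fps_deriv A = A * P"
    unfolding A_prod P_def
    by (rule ld_prod[OF finR]) (rule ld_power[OF ld_lin])
  have Pn: "P $ n = - (\<Sum>z\<in>R. of_nat (order z f) * z ^ (n+1))" for n
    by (simp add: P_def fps_sum_nth sum_negf)
  have Aint: "A $ i \<in> \<int>" for i
    by (simp add: A_def coeff_reflect_poly ints)
  have A0: "A $ 0 = 1" by (simp add: A_def lead)
  have Pint: "P $ n \<in> \<int>" for n
  proof (induction n rule: less_induct)
    case (less n)
    have "(fps_deriv A) $ n = (A * P) $ n" by (simp add: dA)
    also have "\<dots> = (\<Sum>i=0..n. A $ i * P $ (n - i))" by (simp add: fps_mult_nth)
    also have "\<dots> = A $ 0 * P $ n + (\<Sum>i=Suc 0..n. A $ i * P $ (n - i))"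
      by (simp add: sum.atLeast_Suc_atMost)
    finally have "P $ n = (fps_deriv A) $ n - (\<Sum>i=Suc 0..n. A $ i * P $ (n - i))"
      by (simp add: A0)
    moreover have "(fps_deriv A) $ n \<in> \<int>" by (simp add: Aint)
    moreover have "(\<Sum>i=Suc 0..n. A $ i * P $ (n - i)) \<in> \<int>"
      by (intro Ints_sum Ints_mult Aint less) auto
    ultimately show ?case by simp
  qed
  show ?thesis
  proof (cases k)
    case 0 then show ?thesis by (simp, intro Ints_sum Ints_of_nat)
  next
    case (Suc n)
    have "- (P $ n) \<in> \<int>" using Pint by simp
    then show ?thesis using Pn[of n] Suc by (simp add: R_def)
  qed
qed

lemma lagrange_extract:
  fixes R :: "complex set" and m :: "complex \<Rightarrow> nat" and s :: "nat \<Rightarrow> complex"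
  assumes finR: "finite R" and gR: "g \<in> R" and mg: "m g > 0"
    and s_def: "\<And>k. s k = (\<Sum>z\<in>R. of_nat (m z) * z ^ k)"
  shows "\<exists>c r. \<forall>k. g ^ k = (\<Sum>j<r. c j * s (k + j))"
proof -
  define L where "L = (\<Prod>z\<in>R-{g}. [:-z,1:])"
  have Lg: "poly L g \<noteq> 0" using finR by (simp add: L_def poly_prod)
  have Lz: "poly L z = 0" if "z \<in> R" "z \<noteq> g" for z
    using finR that by (simp add: L_def poly_prod prod_zero_iff)
  define r where "r = Suc (degree L)"
  define D where "D = of_nat (m g) * poly L g"
  have D0: "D \<noteq> 0" using Lg mg by (simp add: D_def)
  define c where "c j = coeff L j / D" for j
  have polyL: "poly L z = (\<Sum>j<r. coeff L j * z ^ j)" for z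
    by (simp add: poly_altdef r_def lessThan_Suc_atMost)
  have "(\<Sum>j<r. c j * s (k + j)) = g ^ k" for k
  proof -
    have "(\<Sum>j<r. c j * s (k + j)) = (\<Sum>j<r. \<Sum>z\<in>R. c j * (of_nat (m z) * z ^ (k + j)))"
      by (simp add: s_def sum_distrib_left)
    also have "\<dots> = (\<Sum>z\<in>R. \<Sum>j<r. c j * (of_nat (m z) * z ^ (k + j)))"
      by (rule sum.swap)
    also have "\<dots> = (\<Sum>z\<in>R. of_nat (m z) * z ^ k * poly L z / D)"
      by (intro sum.cong refl)
         (simp add: polyL sum_distrib_left sum_divide_distrib c_def power_add mult_ac)
    also have "\<dots> = of_nat (m g) * g ^ k * poly L g / D + (\<Sum>z\<in>R-{g}. of_nat (m z) * z ^ k * poly L z / D)"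
      using finR gR by (simp add: sum.remove)
    also have "(\<Sum>z\<in>R-{g}. of_nat (m z) * z ^ k * poly L z / D) = 0"
      by (intro sum.neutral) (auto simp: Lz)
    finally show ?thesis using D0 by (simp add: D_def)
  qed
  then show ?thesis by metis
qed

lemma finite_powers_root_unity:
  fixes g :: complex
  assumes "g \<noteq> 0" "finite (range (\<lambda>k::nat. g ^ k))"
  shows "\<exists>n>0. g ^ n = 1"
proof -
  have "\<not> inj (\<lambda>k::nat. g ^ k)"
    using assms(2) finite_imageD infinite_UNIV_nat by blast
  then obtain a b :: nat where ab: "a \<noteq> b" "g ^ a = g ^ b" unfolding inj_def by blast
  show ?thesis
  proof (cases "a < b")
    case True
    have "g ^ b = g ^ a * g ^ (b - a)" using True by (simp add: power_add[symmetric])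
    then have "g ^ (b - a) = 1" using ab assms(1) by simp
    then show ?thesis using True by (intro exI[of _ "b - a"]) auto
  next
    case False
    then have "b < a" using ab by simp
    have "g ^ a = g ^ b * g ^ (a - b)" using \<open>b < a\<close> by (simp add: power_add[symmetric])
    then have "g ^ (a - b) = 1" using ab assms(1) by simp
    then show ?thesis using \<open>b < a\<close> by (intro exI[of _ "a - b"]) auto
  qed
qed

lemma kronecker:
  fixes f :: "complex poly"
  assumes lead: "lead_coeff f = 1" and ints: "\<And>i. coeff f i \<in> \<int>"
    and nz: "poly f 0 \<noteq> 0" and disc: "\<And>z. poly f z = 0 \<Longrightarrow> norm z \<le> 1"
    and root: "poly f g = 0"
  shows "\<exists>n>0. g ^ n = 1"
proof -
  define R where "R = {z. poly f z = 0}"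
  have f0: "f \<noteq> 0" using lead by auto
  have finR: "finite R" unfolding R_def using f0 by (rule poly_roots_finite)
  define s where "s k = (\<Sum>z\<in>R. of_nat (order z f) * z ^ k)" for k
  define N where "N = (\<Sum>z\<in>R. order z f)"
  have sint: "s k \<in> \<int>" for k
    unfolding s_def R_def by (rule power_sums_int[OF lead ints])
  have snorm: "norm (s k) \<le> real N" for k
  proof -
    have "norm (s k) \<le> (\<Sum>z\<in>R. norm (of_nat (order z f) * z ^ k))"
      unfolding s_def by (rule norm_sum)
    also have "\<dots> \<le> (\<Sum>z\<in>R. real (order z f))"
    proof (rule sum_mono)
      fix z assume "z \<in> R"
      then have "norm z \<le> 1" using disc by (simp add: R_def)
      then have "norm z ^ k \<le> 1" by (simp add: power_le_one)
      then show "norm (of_nat (order z f) * z ^ k) \<le> real (order z f)"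
        by (simp add: norm_mult norm_power mult_left_le)
    qed
    finally show ?thesis by (simp add: N_def)
  qed
  define V where "V = (of_int :: int \<Rightarrow> complex) ` {- int N..int N}"
  have finV: "finite V" by (simp add: V_def)
  have sV: "s k \<in> V" for k
  proof -
    obtain i where i: "s k = of_int i" using sint[of k] by (auto elim: Ints_cases)
    have "norm (of_int i :: complex) \<le> real N" using snorm[of k] i by simp
    then have "\<bar>i\<bar> \<le> int N" by (simp del: of_int_abs add: of_int_abs[symmetric])
    then have "i \<in> {- int N..int N}" by auto
    then show ?thesis using i by (auto simp: V_def)
  qed
  have gR: "g \<in> R" using root by (simp add: R_def)
  have mg: "order g f > 0" using root f0 by (simp add: order_root)
  obtain c r where cr: "\<And>k. g ^ k = (\<Sum>j<r. c j * s (k + j))"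
    using lagrange_extract[OF finR gR, of "\<lambda>z. order z f" s, OF mg s_def] by blast
  define F where "F xs = (\<Sum>j<r. c j * xs ! j)" for xs
  have "range (\<lambda>k::nat. g ^ k) \<subseteq> F ` {xs. set xs \<subseteq> V \<and> length xs = r}"
  proof
    fix y assume "y \<in> range (\<lambda>k::nat. g ^ k)"
    then obtain k where y: "y = g ^ k" by auto
    define xs where "xs = map (\<lambda>j. s (k + j)) [0..<r]"
    have "F xs = y" unfolding F_def xs_def y cr by (intro sum.cong) auto
    moreover have "set xs \<subseteq> V \<and> length xs = r" unfolding xs_def using sV by auto
    ultimately show "y \<in> F ` {xs. set xs \<subseteq> V \<and> length xs = r}" by blast
  qed
  then have "finite (range (\<lambda>k::nat. g ^ k))"
    by (rule finite_subset) (intro finite_imageI finite_lists_length_eq finV)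
  moreover have "g \<noteq> 0" using root nz by auto
  ultimately show ?thesis using finite_powers_root_unity by blast
qed


lemma mpi_pCons: "map_poly (of_int :: int \<Rightarrow> 'a::ring_char_0) (pCons a p) = pCons (of_int a) (map_poly of_int p)"
  by (rule poly_eqI) (simp add: coeff_map_poly coeff_pCons split: nat.splits)

lemma mpi_of_nat: "map_poly (of_int :: int \<Rightarrow> 'a::comm_ring_1) (of_nat n) = of_nat n"
  by (induction n) (simp_all add: mpi_add)

lemma rat_poly_denom:
  fixes M :: "rat poly"
  shows "\<exists>a::int. a > 0 \<and> (\<exists>A. smult (of_int a) M = map_poly of_int A)"
proof (induction M rule: pCons_induct)
  case 0 then show ?case by (intro exI[of _ 1]) (auto intro: exI[of _ 0])
next
  case (pCons c M)
  obtain a A where aA: "a > 0" "smult (of_int a) M = map_poly of_int A" using pCons.IH by blast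
  obtain n q where nq: "quotient_of c = (n, q)" by (cases "quotient_of c")
  have c: "c = of_int n / of_int q" using nq by (rule quotient_of_div)
  have q: "q > 0" using nq by (rule quotient_of_denom_pos)
  have "smult (of_int (a * q)) (pCons c M) = map_poly of_int (pCons (a * n) (smult q A))"
  proof -
    have "smult (of_int (a * q)) (pCons c M) = pCons (of_int (a * q) * c) (smult (of_int q) (smult (of_int a) M))"
      by (simp add: mult_ac)
    also have "of_int (a * q) * c = (of_int (a * n) :: rat)" using q by (simp add: c field_simps)
    also have "smult (of_int q) (smult (of_int a) M) = map_poly of_int (smult q A)"
      by (simp add: aA mpi_smult)
    finally show ?thesis by (simp add: mpi_pCons)
  qed
  then show ?case using aA q by (intro exI[of _ "a * q"]) auto
qed

lemma content_monic: "lead_coeff (X :: int poly) = 1 \<Longrightarrow> Polynomial.content X = 1"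
proof -
  assume X: "lead_coeff X = 1"
  have "Polynomial.content X dvd lead_coeff X" by (rule content_dvd_coeff)
  then have "Polynomial.content X dvd 1" using X by simp
  moreover have "Polynomial.content X \<ge> 0" using normalize_content[of X] by (metis abs_ge_zero normalize_int_def)
  ultimately show ?thesis by simp
qed

lemma gauss_monic:
  fixes X :: "int poly" and M H :: "rat poly"
  assumes X: "lead_coeff X = 1" and M: "lead_coeff M = 1" and eq: "map_poly of_int X = M * H"
  shows "coeff M i \<in> \<int>"
proof -
  have M0: "M \<noteq> 0" using M by auto
  have "lead_coeff (map_poly of_int X :: rat poly) = 1" using X by (simp add: mpi_lead)
  then have H: "lead_coeff H = 1" using M by (simp add: eq lead_coeff_mult)
  obtain a A where aA: "a > 0" "smult (of_int a) M = map_poly of_int A" using rat_poly_denom by blast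
  obtain b B where bB: "b > 0" "smult (of_int b) H = map_poly of_int B" using rat_poly_denom by blast
  have "map_poly of_int (A * B) = (map_poly of_int (smult (a * b) X) :: rat poly)"
    by (simp add: mpi_mult mpi_smult aA(2)[symmetric] bB(2)[symmetric] eq mult_ac)
  then have AB: "A * B = smult (a * b) X" by (simp only: mpi_eq_iff)
  have leadA: "lead_coeff A = a"
  proof -
    have "(of_int (lead_coeff A) :: rat) = lead_coeff (map_poly of_int A)" by (simp add: mpi_lead)
    also have "\<dots> = of_int a" by (simp add: aA(2)[symmetric] M)
    finally show ?thesis by simp
  qed
  have leadB: "lead_coeff B = b"
  proof -
    have "(of_int (lead_coeff B) :: rat) = lead_coeff (map_poly of_int B)" by (simp add: mpi_lead)
    also have "\<dots> = of_int b" by (simp add: bB(2)[symmetric] H)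
    finally show ?thesis by simp
  qed
  have cAB: "Polynomial.content A * Polynomial.content B = a * b"
    using content_mult[of A B] AB content_smult[of "a*b" X] content_monic[OF X] aA(1) bB(1)
    by (simp add: abs_mult)
  have A0: "A \<noteq> 0" using leadA aA by auto
  have B0: "B \<noteq> 0" using leadB bB by auto
  have cApos: "Polynomial.content A > 0"
    using A0 normalize_content[of A] by (metis abs_ge_zero content_eq_zero_iff normalize_int_def order_le_less)
  have cBpos: "Polynomial.content B > 0"
    using B0 normalize_content[of B] by (metis abs_ge_zero content_eq_zero_iff normalize_int_def order_le_less)
  have "Polynomial.content A dvd a" using content_dvd_coeff[of A "degree A"] leadA by simp
  then have cAle: "Polynomial.content A \<le> a" using aA(1) by (simp add: zdvd_imp_le)
  have "Polynomial.content B dvd b" using content_dvd_coeff[of B "degree B"] leadB by simp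
  then have cBle: "Polynomial.content B \<le> b" using bB(1) by (simp add: zdvd_imp_le)
  have cA: "Polynomial.content A = a"
  proof (rule ccontr)
    assume "Polynomial.content A \<noteq> a"
    then have "Polynomial.content A < a" using cAle by simp
    then have "Polynomial.content A * Polynomial.content B < a * Polynomial.content B" using cBpos by simp
    also have "\<dots> \<le> a * b" using cBle aA(1) by simp
    finally show False using cAB by simp
  qed
  have "a dvd coeff A i" using content_dvd_coeff[of A i] cA by simp
  then obtain t where t: "coeff A i = a * t" by (auto elim: dvdE)
  have "of_int a * coeff M i = of_int (coeff A i)"
    using arg_cong[OF aA(2), of "\<lambda>p. coeff p i"] by (simp add: coeff_map_poly)
  then have "of_int a * coeff M i = of_int a * of_int t" by (simp add: t)
  then have "coeff M i = of_int t" using aA(1) by simp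
  then show ?thesis by simp
qed

lemma ints_poly_rat:
  fixes M :: "rat poly"
  assumes "\<And>i. coeff M i \<in> \<int>"
  shows "M = map_poly of_int (map_poly floor M)"
proof (rule poly_eqI)
  fix i
  from assms[of i] obtain n where "coeff M i = of_int n" by (auto elim: Ints_cases)
  then show "coeff M i = coeff (map_poly of_int (map_poly floor M)) i"
    by (simp add: coeff_map_poly)
qed

lemma monic_div_int:
  fixes A G :: "int poly" and Q :: "'a::field_char_0 poly"
  assumes G: "lead_coeff G = 1" and eq: "map_poly of_int A = map_poly of_int G * Q"
  shows "\<exists>Q'. Q = map_poly of_int Q' \<and> A = G * Q'"
proof -
  have G0: "G \<noteq> 0" using G by auto
  obtain q r where pd: "pseudo_divmod A G = (q, r)" by (cases "pseudo_divmod A G")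
  have Aeq: "A = G * q + r" using pseudo_divmod(1)[OF G0 pd] G by simp
  have rdeg: "r = 0 \<or> degree r < degree G" using pseudo_divmod(2)[OF G0 pd] .
  have "map_poly of_int G * (Q - map_poly of_int q) = (map_poly of_int r :: 'a poly)"
    using eq by (simp add: Aeq mpi_add mpi_mult algebra_simps)
  moreover have "Q = map_poly of_int q"
  proof (rule ccontr)
    assume ne: "Q \<noteq> map_poly of_int q"
    have G'0: "map_poly of_int G \<noteq> (0 :: 'a poly)" using G0 by (simp add: mpi_eq_0_iff)
    have "degree (map_poly of_int G * (Q - map_poly of_int q)) = degree G + degree (Q - map_poly of_int q)"
      using ne G'0 by (simp add: degree_mult_eq mpi_degree)
    moreover have "map_poly of_int G * (Q - map_poly of_int q) \<noteq> 0" using ne G'0 by simp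
    ultimately have "r \<noteq> 0" "degree r \<ge> degree G"
      using \<open>map_poly of_int G * (Q - map_poly of_int q) = map_poly of_int r\<close>
      by (auto simp: mpi_degree)
    then show False using rdeg by simp
  qed
  ultimately have "map_poly of_int r = (0 :: 'a poly)" by simp
  then have "r = 0" by (simp add: mpi_eq_0_iff)
  then show ?thesis using Aeq \<open>Q = map_poly of_int q\<close> by auto
qed

lemma binom_prime:
  fixes u v :: "'a::comm_ring_1"
  assumes p: "prime p"
  shows "\<exists>W. (u + v) ^ p = u ^ p + v ^ p + of_nat p * W"
proof -
  have p0: "p > 0" using p by (simp add: prime_gt_0_nat)
  define W where "W = (\<Sum>k\<in>{0<..<p}. of_nat ((p choose k) div p) * u ^ k * v ^ (p - k))"
  have "(u + v) ^ p = (\<Sum>k\<le>p. of_nat (p choose k) * u ^ k * v ^ (p - k))"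
    by (rule binomial_ring)
  also have "{..p} = insert 0 (insert p {0<..<p})" using p0 by auto
  also have "(\<Sum>k\<in>insert 0 (insert p {0<..<p}). of_nat (p choose k) * u ^ k * v ^ (p - k))
      = v ^ p + (u ^ p + (\<Sum>k\<in>{0<..<p}. of_nat (p choose k) * u ^ k * v ^ (p - k)))"
    using p0 by (simp add: sum.insert)
  also have "(\<Sum>k\<in>{0<..<p}. of_nat (p choose k) * u ^ k * v ^ (p - k)) = of_nat p * W"
  proof -
    have "of_nat (p choose k) = of_nat p * (of_nat ((p choose k) div p) :: 'a)" if "k \<in> {0<..<p}" for k
    proof -
      have "p dvd p choose k" using that p by (intro dvd_choose_prime) auto
      then have "p choose k = p * ((p choose k) div p)" by simp
      then show ?thesis by (metis of_nat_mult)
    qed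
    then show ?thesis unfolding W_def sum_distrib_left by (intro sum.cong) (auto simp: mult_ac)
  qed
  finally show ?thesis by (intro exI[of _ W]) (simp add: algebra_simps)
qed

lemma fermat_nat_int:
  assumes p: "prime p"
  shows "int p dvd int a ^ p - int a"
proof (induction a)
  case 0 then show ?case using p by (simp add: prime_gt_0_nat power_0_left)
next
  case (Suc a)
  obtain W where W: "(1 + int a) ^ p = 1 ^ p + int a ^ p + of_nat p * W"
    using binom_prime[OF p, of 1 "int a"] by blast
  have e: "int (Suc a) ^ p - int (Suc a) = (int a ^ p - int a) + int p * W"
    using W unfolding of_nat_Suc power_one by linarith
  have "int p dvd (int a ^ p - int a) + int p * W" using Suc by (intro dvd_add) auto
  then show ?case unfolding e .
qed

lemma fermat_int:
  assumes p: "prime p"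
  shows "int p dvd a ^ p - a"
proof -
  have pp: "int p > 0" using p by (simp add: prime_gt_0_nat)
  define b where "b = nat (a mod int p)"
  have bb: "int b = a mod int p" using pp by (simp add: b_def)
  have "int p dvd int b ^ p - int b" by (rule fermat_nat_int[OF p])
  then have "(int b ^ p) mod int p = int b mod int p" by (simp add: mod_eq_dvd_iff)
  then have "(a mod int p) ^ p mod int p = a mod int p" by (simp add: bb)
  then have "a ^ p mod int p = a mod int p" by (simp add: power_mod)
  then show ?thesis by (simp add: mod_eq_dvd_iff)
qed

lemma const_power: "[:a:] ^ n = [:a ^ n :: 'a::comm_ring_1:]"
  by (induction n) simp_all

lemma pCons_as: "pCons a q = [:a:] + monom (1::'a::comm_ring_1) 1 * q"
  by (rule poly_eqI) (simp add: coeff_pCons coeff_monom_mult split: nat.splits)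

lemma frobenius:
  fixes H :: "int poly"
  assumes p: "prime p"
  shows "\<exists>T. H ^ p = pcompose H (monom 1 p) + of_nat p * T"
proof (induction H rule: pCons_induct)
  case 0 then show ?case using p by (intro exI[of _ 0]) (simp add: prime_gt_0_nat)
next
  case (pCons a q)
  obtain T where T: "q ^ p = pcompose q (monom 1 p) + of_nat p * T" using pCons.IH by blast
  obtain W where W: "([:a:] + monom 1 1 * q) ^ p = [:a:] ^ p + (monom 1 1 * q) ^ p + of_nat p * W"
    using binom_prime[OF p] by blast
  obtain t where t: "a ^ p - a = int p * t" using fermat_int[OF p, of a] by (auto elim: dvdE)
  have c: "[:a:] ^ p = [:a:] + of_nat p * [:t:]"
  proof -
    have "[:a:] ^ p = [:a ^ p:]" by (simp add: const_power)
    also have "a ^ p = a + int p * t" using t by simp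
    finally show ?thesis by (simp add: of_nat_poly)
  qed
  have m: "(monom 1 1 * q) ^ p = monom (1::int) p * q ^ p"
    by (simp add: power_mult_distrib monom_power)
  have "pCons a q ^ p = ([:a:] + monom 1 1 * q) ^ p" by (simp only: pCons_as[of a q])
  also have "\<dots> = [:a:] + of_nat p * [:t:] + monom 1 p * (pcompose q (monom 1 p) + of_nat p * T) + of_nat p * W"
    by (simp only: W c m T)
  also have "\<dots> = ([:a:] + monom 1 p * pcompose q (monom 1 p)) + of_nat p * ([:t:] + monom 1 p * T + W)"
    by (simp add: algebra_simps)
  also have "[:a:] + monom 1 p * pcompose q (monom 1 p) = pcompose (pCons a q) (monom 1 p)"
    by (simp add: pcompose_pCons)
  finally have "pCons a q ^ p = pcompose (pCons a q) (monom 1 p) + of_nat p * ([:t:] + monom 1 p * T + W)" .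
  then show ?case by blast
qed

lemma coeff_dvd_monic:
  fixes G Q :: "int poly"
  assumes lead: "lead_coeff G = 1" and degG: "degree G \<ge> 1"
    and dv: "\<And>i. i \<ge> 1 \<Longrightarrow> c dvd coeff (G * Q) i"
  shows "c dvd coeff Q j"
proof (rule ccontr)
  assume nj: "\<not> c dvd coeff Q j"
  define S where "S = {j. \<not> c dvd coeff Q j}"
  have Ssub: "S \<subseteq> {..degree Q}"
  proof
    fix x assume "x \<in> S"
    then have "coeff Q x \<noteq> 0" by (auto simp: S_def)
    then show "x \<in> {..degree Q}" by (auto intro: le_degree)
  qed
  have finS: "finite S" using Ssub finite_subset by blast
  have jS: "j \<in> S" using nj by (simp add: S_def)
  define m where "m = Max S"
  have mS: "m \<in> S" unfolding m_def using finS jS by (intro Max_in) auto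
  have above: "c dvd coeff Q k" if "k > m" for k
  proof (rule ccontr)
    assume "\<not> c dvd coeff Q k"
    then have "k \<in> S" by (simp add: S_def)
    then have "k \<le> m" unfolding m_def using finS by simp
    then show False using that by simp
  qed
  define n where "n = degree G + m"
  have "coeff (G * Q) n = (\<Sum>i\<le>n. coeff G i * coeff Q (n - i))" by (rule coeff_mult)
  also have "\<dots> = coeff G (degree G) * coeff Q (n - degree G) + (\<Sum>i\<in>{..n}-{degree G}. coeff G i * coeff Q (n - i))"
    by (subst sum.remove[of _ "degree G"]) (auto simp: n_def)
  finally have eq: "coeff (G * Q) n = coeff Q m + (\<Sum>i\<in>{..n}-{degree G}. coeff G i * coeff Q (n - i))"
    using lead by (simp add: n_def)
  have "c dvd (\<Sum>i\<in>{..n}-{degree G}. coeff G i * coeff Q (n - i))"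
  proof (rule dvd_sum)
    fix i assume i: "i \<in> {..n}-{degree G}"
    show "c dvd coeff G i * coeff Q (n - i)"
    proof (cases "i < degree G")
      case True
      then have "n - i > m" by (simp add: n_def)
      then show ?thesis using above by simp
    next
      case False
      then have "i > degree G" using i by simp
      then have "coeff G i = 0" by (simp add: coeff_eq_0)
      then show ?thesis by simp
    qed
  qed
  moreover have "c dvd coeff (G * Q) n" using degG by (intro dv) (simp add: n_def)
  ultimately have "c dvd coeff Q m" using eq by (simp add: dvd_add_left_iff)
  then show False using mS by (simp add: S_def)
qed

lemma minpoly_ex:
  fixes \<eta> :: complex
  assumes d: "d > 0" "\<eta> ^ d = 1"
  shows "\<exists>M::rat poly. lead_coeff M = 1 \<and> poly (map_poly of_rat M) \<eta> = 0 \<and>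
           (\<forall>h. poly (map_poly of_rat h) \<eta> = 0 \<longrightarrow> M dvd h)"
proof -
  define Pr where "Pr n = (\<exists>M::rat poly. lead_coeff M = 1 \<and> degree M = n \<and> poly (map_poly of_rat M) \<eta> = 0)" for n
  have X: "lead_coeff (monom (1::rat) d - 1) = 1 \<and> degree (monom (1::rat) d - 1) = d"
  proof -
    have deg: "degree (monom (1::rat) d - 1) = d"
    proof (rule antisym)
      show "degree (monom (1::rat) d - 1) \<le> d"
        by (rule degree_le) (auto simp: coeff_monom)
      show "d \<le> degree (monom (1::rat) d - 1)"
        by (rule le_degree) (use d in \<open>simp add: coeff_monom\<close>)
    qed
    then show ?thesis using d by (simp add: coeff_monom)
  qed
  have "poly (map_poly of_rat (monom (1::rat) d - 1)) \<eta> = 0"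
    using d by (simp add: mpr_diff map_poly_monom poly_monom)
  then have "Pr d" using X unfolding Pr_def by blast
  define n0 where "n0 = (LEAST n. Pr n)"
  have "Pr n0" unfolding n0_def by (rule LeastI[of Pr d]) fact
  then obtain M where M: "lead_coeff M = 1" "degree M = n0" "poly (map_poly of_rat M) \<eta> = 0"
    unfolding Pr_def by blast
  have M0: "M \<noteq> 0" using M by auto
  have "M dvd h" if h: "poly (map_poly of_rat h) \<eta> = 0" for h :: "rat poly"
  proof -
    define r where "r = h mod M"
    have "h = h div M * M + r" by (simp add: r_def)
    then have "map_poly of_rat h = (map_poly of_rat (h div M) * map_poly of_rat M + map_poly of_rat r :: complex poly)"
      by (metis mpr_add mpr_mult)
    then have rr: "poly (map_poly of_rat r) \<eta> = 0" using h M(3) by (simp add: poly_add poly_mult)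
    have "r = 0"
    proof (rule ccontr)
      assume r0: "r \<noteq> 0"
      have dr: "degree r < n0" using degree_mod_less'[OF M0] r0 M(2) by (simp add: r_def)
      define r' where "r' = smult (inverse (lead_coeff r)) r"
      have "lead_coeff r' = 1" "degree r' = degree r" using r0 by (simp_all add: r'_def)
      moreover have "poly (map_poly of_rat r') \<eta> = 0" using rr by (simp add: r'_def mpr_smult)
      ultimately have "Pr (degree r)" unfolding Pr_def by blast
      then have "n0 \<le> degree r" unfolding n0_def by (rule Least_le)
      then show False using dr by simp
    qed
    then show ?thesis by (simp add: r_def mod_eq_0_iff_dvd)
  qed
  then show ?thesis using M by blast
qed


lemma galois_step:
  fixes \<eta> :: complex and d p :: nat and f :: "int poly"
  assumes d: "d > 0" "\<eta> ^ d = 1" and p: "prime p" "\<not> p dvd d"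
    and f: "poly (map_poly of_int f) \<eta> = 0"
  shows "poly (map_poly of_int f) (\<eta> ^ p) = 0"
proof -
  obtain M where M: "lead_coeff M = 1" "poly (map_poly of_rat M) \<eta> = 0"
      "\<forall>h. poly (map_poly of_rat h) \<eta> = 0 \<longrightarrow> M dvd h"
    using minpoly_ex[OF d] by blast
  define X :: "int poly" where "X = monom 1 d - 1"
  have degX: "degree X = d"
  proof (rule antisym)
    show "degree X \<le> d" unfolding X_def by (rule degree_le) (auto simp: coeff_monom)
    show "d \<le> degree X" unfolding X_def by (rule le_degree) (use d in \<open>simp add: coeff_monom\<close>)
  qed
  have Xlead: "lead_coeff X = 1" using d degX by (simp add: X_def coeff_monom)
  have ratroot: "poly (map_poly of_rat (map_poly of_int h :: rat poly)) \<eta> = poly (map_poly of_int h) \<eta>"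
    for h :: "int poly" by (simp add: mpr_of_int)
  have polyX: "poly (map_poly of_int X) z = z ^ d - 1" for z :: complex
    by (simp add: X_def mpi_diff mpi_monom poly_monom)
  have "M dvd map_poly of_int X" using M(3) ratroot[of X] polyX[of \<eta>] d by simp
  then obtain H0 where H0: "map_poly of_int X = M * H0" by (auto elim: dvdE)
  have Mint: "coeff M i \<in> \<int>" for i using gauss_monic[OF Xlead M(1) H0] by blast
  define G where "G = map_poly floor M"
  have MG: "M = map_poly of_int G" unfolding G_def by (rule ints_poly_rat) (use Mint in auto)
  have Glead: "lead_coeff G = 1"
  proof -
    have "(of_int (lead_coeff G) :: rat) = lead_coeff (map_poly of_int G)" by (simp add: mpi_lead)
    also have "\<dots> = 1" using M(1) MG by simp
    finally show ?thesis by simp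
  qed
  have Groot: "poly (map_poly of_int G) \<eta> = 0" using M(2) MG ratroot[of G] by simp
  have key: "\<exists>Q. h = G * Q" if "poly (map_poly of_int h) \<eta> = 0" for h
  proof -
    have "M dvd map_poly of_int h" using M(3) ratroot[of h] that by simp
    then obtain Q where "map_poly of_int h = M * Q" by (auto elim: dvdE)
    then have "map_poly of_int h = map_poly of_int G * Q" by (simp add: MG)
    from monic_div_int[OF Glead this] show ?thesis by blast
  qed
  obtain H where XGH: "X = G * H" using key[of X] polyX[of \<eta>] d by auto
  have degG: "degree G \<ge> 1"
  proof (rule ccontr)
    assume "\<not> degree G \<ge> 1"
    then have "degree G = 0" by simp
    then have "G = [:coeff G 0:]" by (metis degree_eq_zeroE pCons_0_0 coeff_pCons_0)
    also have "coeff G 0 = 1" using Glead \<open>degree G = 0\<close> by simp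
    finally have "G = 1" by simp
    then show False using Groot by simp
  qed
  have Gp: "poly (map_poly of_int G) (\<eta> ^ p) = 0"
  proof (rule ccontr)
    assume nG: "poly (map_poly of_int G) (\<eta> ^ p) \<noteq> 0"
    have "(\<eta> ^ p) ^ d = (\<eta> ^ d) ^ p" by (simp add: power_mult[symmetric] mult.commute)
    then have "poly (map_poly of_int X) (\<eta> ^ p) = 0" using polyX d by simp
    then have Hp: "poly (map_poly of_int H) (\<eta> ^ p) = 0" using nG XGH by (simp add: mpi_mult)
    obtain T where T: "H ^ p = pcompose H (monom 1 p) + of_nat p * T" using frobenius[OF p(1)] by blast
    define hh where "hh = poly (map_poly of_int H) \<eta>"
    define gg where "gg = poly (map_poly of_int (pderiv G)) \<eta>"
    define tt where "tt = poly (map_poly of_int T) \<eta>"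
    have e1: "hh ^ p = of_nat p * tt"
    proof -
      have "hh ^ p = poly (map_poly of_int (H ^ p)) \<eta>" by (simp add: hh_def mpi_power)
      also have "\<dots> = poly (map_poly of_int H) (\<eta> ^ p) + of_nat p * tt"
        by (simp add: T tt_def mpi_add mpi_mult mpi_of_nat mpi_pcompose mpi_monom poly_pcompose poly_monom)
      finally show ?thesis using Hp by simp
    qed
    have dX1: "pderiv X = G * pderiv H + H * pderiv G" by (simp add: XGH pderiv_mult)
    have dX2: "pderiv X = monom (of_nat d) (d - 1)" by (simp add: X_def pderiv_diff pderiv_monom)
    have e2: "of_nat d * \<eta> ^ (d - 1) = hh * gg"
    proof -
      have "of_nat d * \<eta> ^ (d - 1) = poly (map_poly of_int (pderiv X)) \<eta>"
        by (simp add: dX2 mpi_monom poly_monom)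
      also have "\<dots> = poly (map_poly of_int (G * pderiv H + H * pderiv G)) \<eta>" by (simp only: dX1)
      also have "\<dots> = hh * gg" using Groot by (simp add: hh_def gg_def mpi_add mpi_mult)
      finally show ?thesis .
    qed
    define S where "S = T * (pderiv G) ^ p * monom 1 p"
    have e3: "of_nat d ^ p = of_nat p * poly (map_poly of_int S) \<eta>"
    proof -
      have "(of_nat d * \<eta> ^ (d - 1)) ^ p * \<eta> ^ p = of_nat d ^ p * (\<eta> ^ (d - 1) * \<eta>) ^ p"
        by (simp add: power_mult_distrib)
      also have "\<eta> ^ (d - 1) * \<eta> = \<eta> ^ d" using d(1) by (simp add: power_Suc2[symmetric])
      finally have "of_nat d ^ p = (of_nat d * \<eta> ^ (d - 1)) ^ p * \<eta> ^ p" using d(2) by simp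
      also have "\<dots> = (hh * gg) ^ p * \<eta> ^ p" by (simp only: e2)
      also have "\<dots> = hh ^ p * gg ^ p * \<eta> ^ p" by (simp add: power_mult_distrib)
      also have "\<dots> = of_nat p * tt * gg ^ p * \<eta> ^ p" by (simp only: e1)
      also have "\<dots> = of_nat p * poly (map_poly of_int S) \<eta>"
        by (simp add: S_def tt_def gg_def mpi_mult mpi_power mpi_monom poly_monom)
      finally show ?thesis .
    qed
    define A where "A = smult (int p) S - [:int d ^ p:]"
    have "poly (map_poly of_int A) \<eta> = 0"
      using e3 by (simp add: A_def mpi_diff mpi_smult mpi_const)
    then obtain Q where AQ: "A = G * Q" using key by blast
    have "int p dvd coeff Q 0"
    proof (rule coeff_dvd_monic[OF Glead degG])
      fix i :: nat assume "i \<ge> 1"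
      then show "int p dvd coeff (G * Q) i" by (simp add: AQ[symmetric] A_def coeff_pCons split: nat.splits)
    qed
    then have "int p dvd coeff A 0" by (simp add: AQ coeff_mult_0)
    then have "int p dvd int p * coeff S 0 - int d ^ p" by (simp add: A_def)
    moreover have "int p dvd int p * coeff S 0" by simp
    ultimately have "int p dvd int p * coeff S 0 - (int p * coeff S 0 - int d ^ p)" by (rule dvd_diff[rotated])
    then have "int p dvd int d ^ p" by simp
    then have "int p dvd int (d ^ p)" by simp
    then have "p dvd d ^ p" by (simp only: int_dvd_int_iff)
    then have "p dvd d" using prime_dvd_power[OF p(1)] by blast
    then show False using p(2) by simp
  qed
  obtain Q where "f = G * Q" using key[OF f] by blast
  then show ?thesis using Gp by (simp add: mpi_mult)
qed

lemma galois_order: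
  fixes \<eta> :: complex and d p :: nat and f :: "int poly"
  assumes d: "d > 0" "\<eta> ^ d = 1" and p: "prime p" "\<not> p dvd d" and f0: "f \<noteq> 0"
  shows "order \<eta> (map_poly of_int f :: complex poly) \<le> order (\<eta> ^ p) (map_poly of_int f)"
  using f0
proof (induction "order \<eta> (map_poly of_int f :: complex poly)" arbitrary: f)
  case 0 then show ?case by simp
next
  case (Suc n)
  have F0: "map_poly of_int f \<noteq> (0::complex poly)" using Suc.prems by (simp add: mpi_eq_0_iff)
  have r1: "poly (map_poly of_int f) \<eta> = 0" using Suc.hyps(2) F0 order_root by (metis Zero_not_Suc)
  have r2: "poly (map_poly of_int f) (\<eta> ^ p) = 0" by (rule galois_step[OF d p r1])
  have o1: "order \<eta> (map_poly of_int f) = Suc (order \<eta> (pderiv (map_poly of_int f :: complex poly)))"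
    by (rule order_pderiv[OF F0 r1])
  have o2: "order (\<eta> ^ p) (map_poly of_int f) = Suc (order (\<eta> ^ p) (pderiv (map_poly of_int f :: complex poly)))"
    by (rule order_pderiv[OF F0 r2])
  have pd0: "pderiv f \<noteq> 0"
  proof
    assume "pderiv f = 0"
    then have "degree f = 0" by (simp add: pderiv_eq_0_iff)
    then obtain c where c: "f = [:c:]" by (metis degree_eq_zeroE)
    then have "c \<noteq> 0" using Suc.prems by simp
    then show False using r1 c by (simp add: mpi_const)
  qed
  have "n = order \<eta> (map_poly of_int (pderiv f) :: complex poly)" using Suc.hyps(2) o1 by (simp add: mpi_pderiv)
  from Suc.hyps(1)[OF this pd0]
  have "order \<eta> (map_poly of_int (pderiv f) :: complex poly) \<le> order (\<eta> ^ p) (map_poly of_int (pderiv f))" .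
  then show ?case using o1 o2 by (simp add: mpi_pderiv)
qed

lemma order_pow_coprime:
  fixes \<eta> :: complex and f :: "int poly" and d k :: nat
  assumes d: "d > 0" "\<eta> ^ d = 1" and k: "coprime k d" and f0: "f \<noteq> 0"
  shows "order \<eta> (map_poly of_int f :: complex poly) \<le> order (\<eta> ^ k) (map_poly of_int f)"
  using k
proof (induction k rule: less_induct)
  case (less k)
  show ?case
  proof (cases "k = 1")
    case True then show ?thesis by simp
  next
    case False
    show ?thesis
    proof (cases "k = 0")
      case True
      then have "d = 1" using less.prems by simp
      then have "\<eta> = 1" using d by simp
      then show ?thesis using True by simp
    next
      case k0: False
      obtain q where q: "prime q" "q dvd k" using prime_factor_nat[OF False] by blast
      obtain k' where kk: "k = q * k'" using q(2) by (auto elim: dvdE)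
      have "1 * k' < q * k'" using q(1) k0 kk prime_gt_1_nat[OF q(1)] by (intro mult_strict_right_mono) auto
      then have k'lt: "k' < k" using kk by simp
      have cop': "coprime k' d" using less.prems kk by simp
      have copq: "coprime q d" using less.prems kk by simp
      have nq: "\<not> q dvd d"
      proof
        assume "q dvd d"
        then have "is_unit q" using copq by (metis coprime_common_divisor dvd_refl)
        then show False using q(1) by simp
      qed
      have IH: "order \<eta> (map_poly of_int f :: complex poly) \<le> order (\<eta> ^ k') (map_poly of_int f)"
        using less.IH[OF k'lt cop'] .
      have "(\<eta> ^ k') ^ d = (\<eta> ^ d) ^ k'" by (simp add: power_mult[symmetric] mult.commute)
      then have ed: "(\<eta> ^ k') ^ d = 1" using d by simp
      have "order (\<eta> ^ k') (map_poly of_int f :: complex poly) \<le> order ((\<eta> ^ k') ^ q) (map_poly of_int f)"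
        by (rule galois_order[OF d(1) ed q(1) nq f0])
      moreover have "(\<eta> ^ k') ^ q = \<eta> ^ k" using kk by (simp add: power_mult[symmetric] mult.commute)
      ultimately show ?thesis using IH by simp
    qed
  qed
qed


lemma cis_exp_form: "cis (2 * pi * real k / real d) = exp (2 * of_real pi * \<i> * of_nat k / of_nat d)"
  by (simp add: cis_conv_exp mult_ac)

lemma cis_eq1: "d \<ge> 1 \<Longrightarrow> cis (2 * pi * real k / real d) = 1 \<longleftrightarrow> d dvd k"
  unfolding cis_exp_form by (rule complex_root_unity_eq_1)

lemma cis_eq: "d \<ge> 1 \<Longrightarrow> cis (2 * pi * real j / real d) = cis (2 * pi * real k / real d) \<longleftrightarrow> j mod d = k mod d"
  unfolding cis_exp_form by (rule complex_root_unity_eq)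

lemma cis_pow: "cis (2 * pi * real k / real d) ^ m = cis (2 * pi * real (k * m) / real d)"
proof -
  have "cis (2 * pi * real k / real d) ^ m = cis (real m * (2 * pi * real k / real d))" by (rule Complex.DeMoivre)
  also have "real m * (2 * pi * real k / real d) = 2 * pi * real (k * m) / real d" by (simp add: mult_ac)
  finally show ?thesis .
qed

lemma cis_pow_d: "d > 0 \<Longrightarrow> cis (2 * pi * real k / real d) ^ d = 1"
proof -
  assume d: "d > 0"
  have "cis (2 * pi * real (k * d) / real d) = 1" by (rule iffD2[OF cis_eq1]) (use d in auto)
  then show ?thesis by (simp only: cis_pow)
qed

lemma root_unity_cis:
  fixes z :: complex
  assumes "z ^ N = 1" "N > 0"
  shows "\<exists>j<N. z = cis (2 * pi * real j / real N)"
proof -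
  have "z \<in> {z::complex. z ^ N = 1}" using assms by simp
  also have "\<dots> = {exp (2 * of_real pi * \<i> * of_nat j / of_nat N) | j. j < N}"
    using assms by (intro complex_roots_unity) simp
  finally show ?thesis by (auto simp: cis_exp_form)
qed

lemma root_unity_rep:
  fixes z :: complex
  assumes "z ^ N = 1" "N > 0"
  shows "\<exists>d k. d > 0 \<and> 1 \<le> k \<and> k \<le> d \<and> coprime k d \<and> z = cis (2 * pi * real k / real d)"
proof -
  obtain j where j: "j < N" "z = cis (2 * pi * real j / real N)" using root_unity_cis[OF assms] by blast
  show ?thesis
  proof (cases "j = 0")
    case True
    then have "z = 1" using j by simp
    moreover have "cis (2 * pi * real 1 / real 1) = 1" by (simp add: cis_eq1)
    ultimately show ?thesis by (intro exI[of _ 1]) auto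
  next
    case False
    define g where "g = gcd j N"
    have g0: "g > 0" using False by (simp add: g_def)
    define d where "d = N div g"
    define k where "k = j div g"
    have Nd: "N = d * g" by (simp add: d_def g_def)
    have jk: "j = k * g" by (simp add: k_def g_def)
    have cop: "coprime k d" unfolding k_def d_def g_def using False by (rule div_gcd_coprime[OF disjI1])
    have d0: "d > 0" using Nd assms(2) by (cases d) auto
    have k1: "1 \<le> k" using jk False by (cases k) auto
    have "k * g < d * g" using j(1) Nd jk by simp
    then have kd: "k \<le> d" using g0 by simp
    have rr: "real j / real N = real k / real d" using g0 d0 by (simp add: Nd jk field_simps)
    have "2 * pi * real j / real N = 2 * pi * (real j / real N)" by (simp only: times_divide_eq_right)
    also have "\<dots> = 2 * pi * real k / real d" by (simp only: rr times_divide_eq_right)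
    finally have "z = cis (2 * pi * real k / real d)" using j(2) by simp
    then show ?thesis using d0 k1 kd cop by blast
  qed
qed

lemma cis_rep_unique:
  assumes d: "d > 0" "d' > 0" and c: "coprime k d" "coprime k' d'"
    and eq: "cis (2 * pi * real k / real d) = cis (2 * pi * real k' / real d')"
  shows "d = d'"
proof -
  have dv: "d dvd d'" if "d > 0" "d' > 0" "coprime k d"
      "cis (2 * pi * real k / real d) = cis (2 * pi * real k' / real d')" for d d' k k'
  proof -
    have "cis (2 * pi * real k' / real d') ^ d' = 1" using that by (simp add: cis_pow_d)
    then have "cis (2 * pi * real k / real d) ^ d' = 1" using that by simp
    then have "cis (2 * pi * real (k * d') / real d) = 1" by (simp only: cis_pow)
    moreover have "cis (2 * pi * real (k * d') / real d) = 1 \<longleftrightarrow> d dvd k * d'"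
      by (rule cis_eq1) (use that in auto)
    ultimately have "d dvd k * d'" by blast
    then show "d dvd d'" using that(3) by (metis coprime_commute coprime_dvd_mult_right_iff)
  qed
  have "d dvd d'" using dv[OF d c(1) eq] .
  moreover have "d' dvd d" using dv[OF d(2) d(1) c(2) eq[symmetric]] .
  ultimately show ?thesis by (rule dvd_antisym)
qed

definition K :: "nat \<Rightarrow> nat set" where "K d = {k. 1 \<le> k \<and> k \<le> d \<and> coprime k d}"
definition prim :: "nat \<Rightarrow> complex set" where "prim d = (\<lambda>k. cis (2 * pi * real k / real d)) ` K d"

lemma finite_K: "finite (K d)" by (rule finite_subset[of _ "{..d}"]) (auto simp: K_def)

lemma inj_K: "d > 0 \<Longrightarrow> inj_on (\<lambda>k. cis (2 * pi * real k / real d)) (K d)"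
proof (rule inj_onI)
  fix a b assume d: "d > 0" and ab: "a \<in> K d" "b \<in> K d"
    and eq: "cis (2 * pi * real a / real d) = cis (2 * pi * real b / real d)"
  have m: "a mod d = b mod d" using eq cis_eq[of d a b] d by simp
  have a: "1 \<le> a" "a \<le> d" and b: "1 \<le> b" "b \<le> d" using ab by (auto simp: K_def)
  show "a = b"
  proof (cases "a = d")
    case True
    then have "b mod d = 0" using m by simp
    then have "d dvd b" by (simp add: mod_eq_0_iff_dvd)
    then have "b = d" using b by (metis dvd_imp_le le_antisym not_one_le_zero le_0_eq neq0_conv)
    then show ?thesis using True by simp
  next
    case False
    then have "a < d" using a by simp
    show ?thesis
    proof (cases "b = d")
      case True
      then have "a mod d = 0" using m by simp
      then show ?thesis using \<open>a < d\<close> a by simp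
    next
      case False
      then have "b < d" using b by simp
      then show ?thesis using m \<open>a < d\<close> by simp
    qed
  qed
qed

lemma cyclo_prim: "d > 0 \<Longrightarrow> cyclo d = (\<Prod>z\<in>prim d. [:-z, 1:])"
proof -
  assume d: "d > 0"
  have "cyclo d = (\<Prod>k\<in>K d. [:- cis (2 * pi * real k / real d), 1:])"
    by (simp only: cyclo_def K_def)
  also have "\<dots> = (\<Prod>z\<in>prim d. [:-z, 1:])"
    unfolding prim_def by (subst prod.reindex[OF inj_K[OF d]]) simp
  finally show ?thesis .
qed

lemma finite_prim: "finite (prim d)" by (simp add: prim_def finite_K)

lemma order_lin_prod:
  fixes A :: "complex set"
  assumes "finite A"
  shows "order z (\<Prod>a\<in>A. [:-a, 1:]) = (if z \<in> A then 1 else (0::nat))"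
  using assms
proof (induction A rule: finite_induct)
  case empty then show ?case by (simp add: order_0I)
next
  case (insert x F)
  have f1: "[:-x, 1:] \<noteq> (0::complex poly)" by simp
  have f2: "(\<Prod>a\<in>F. [:-a, 1:]) \<noteq> (0::complex poly)" using insert.hyps(1) by (simp add: prod_zero_iff)
  have nz: "[:-x, 1:] * (\<Prod>a\<in>F. [:-a, 1:]) \<noteq> (0 :: complex poly)"
    using f1 f2 by (metis mult_eq_0_iff)
  have ox: "order z [:-x, 1:] = (if z = x then 1 else 0)"
  proof (cases "z = x")
    case True then show ?thesis using order_power_n_n[of x 1] by simp
  next
    case False then show ?thesis by (simp add: order_0I)
  qed
  have "order z (\<Prod>a\<in>insert x F. [:-a, 1:]) = order z ([:-x, 1:] * (\<Prod>a\<in>F. [:-a, 1:]))"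
    using insert by simp
  also have "\<dots> = order z [:-x, 1:] + order z (\<Prod>a\<in>F. [:-a, 1:])"
    using nz by (rule order_mult)
  also have "\<dots> = (if z = x then 1 else 0) + (if z \<in> F then 1 else 0)"
    using ox insert.IH by simp
  finally show ?case using insert.hyps(2) by (cases "z = x") auto
qed

lemma order_cyclo: "d > 0 \<Longrightarrow> order z (cyclo d) = (if z \<in> prim d then 1 else 0)"
proof -
  assume d: "d > 0"
  have "order z (cyclo d) = order z (\<Prod>z\<in>prim d. [:-z, 1:])" by (simp only: cyclo_prim[OF d])
  also have "\<dots> = (if z \<in> prim d then 1 else 0)" by (rule order_lin_prod[OF finite_prim])
  finally show ?thesis .
qed

lemma lead_cyclo: "lead_coeff (cyclo d) = 1"
  unfolding cyclo_def by (subst lead_coeff_prod) simp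

lemma cyclo_nz: "cyclo d \<noteq> 0"
proof
  assume "cyclo d = 0"
  then have "lead_coeff (cyclo d) = 0" by simp
  then show False using lead_cyclo[of d] by simp
qed

lemma order_power: "p \<noteq> 0 \<Longrightarrow> order z (p ^ n) = n * order z (p :: complex poly)"
  by (induction n) (simp_all add: order_mult order_1)

lemma order_prod_pow:
  assumes "finite D" "\<And>d. d \<in> D \<Longrightarrow> Q d \<noteq> (0::complex poly)"
  shows "order z (\<Prod>d\<in>D. Q d ^ e d) = (\<Sum>d\<in>D. e d * order z (Q d))"
  using assms
proof (induction D rule: finite_induct)
  case empty then show ?case by (simp add: order_1)
next
  case (insert x F)
  have nz: "Q x ^ e x * (\<Prod>d\<in>F. Q d ^ e d) \<noteq> 0" using insert by (simp add: prod_zero_iff)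
  show ?case using insert by (simp add: order_mult[OF nz] order_power)
qed

lemma eq_by_orders:
  fixes P Q :: "complex poly"
  assumes "lead_coeff P = 1" "lead_coeff Q = 1" "\<And>z. order z P = order z Q"
  shows "P = Q"
proof -
  have P0: "P \<noteq> 0" and Q0: "Q \<noteq> 0" using assms by auto
  have S: "{z. poly P z = 0} = {z. poly Q z = 0}"
    using assms(3) P0 Q0 by (auto simp: order_root)
  have eP: "(\<Prod>z | poly P z = 0. [:-z, 1:] ^ order z P) = P"
    using complex_poly_decompose[of P] assms(1) by simp
  have eQ: "(\<Prod>z | poly Q z = 0. [:-z, 1:] ^ order z Q) = Q"
    using complex_poly_decompose[of Q] assms(2) by simp
  have "(\<Prod>z | poly P z = 0. [:-z, 1:] ^ order z P) = (\<Prod>z | poly Q z = 0. [:-z, 1:] ^ order z Q)"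
    unfolding S assms(3) ..
  then show ?thesis unfolding eP eQ .
qed


lemma sp_eq:
  assumes ns: "numerical_semigroup S"
  shows "semigroup_poly S = 1 + (monom 1 1 - 1) * (\<Sum>g\<in>UNIV - S. monom 1 g)"
proof -
  define gaps where "gaps = UNIV - S"
  have fin: "finite gaps" using ns by (simp add: numerical_semigroup_def gaps_def)
  define Gp :: "int poly" where "Gp = (\<Sum>g\<in>gaps. monom 1 g)"
  define P0 where "P0 = 1 + (monom 1 1 - 1) * Gp"
  define I :: "int fps" where "I = Abs_fps (\<lambda>n. if n \<in> S then 1 else 0)"
  define J where "J = fps_of_poly Gp"
  define E :: "int fps" where "E = Abs_fps (\<lambda>n. 1)"
  have cG: "coeff Gp n = (if n \<in> gaps then 1 else 0)" for n
    unfolding Gp_def using fin by (simp add: coeff_sum coeff_monom)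
  have IJ: "I + J = E"
    by (rule fps_ext) (simp add: I_def J_def E_def cG gaps_def)
  have E1: "(1 - fps_X) * E = 1"
  proof (rule fps_ext)
    fix n
    have "(1 - fps_X) * E = E - fps_X * E" by (simp add: algebra_simps)
    then show "((1 - fps_X) * E) $ n = (1 :: int fps) $ n"
      by (simp add: fps_X_mult_nth E_def)
  qed
  have fP0: "fps_of_poly P0 = (1 - fps_X) * I"
  proof -
    have "fps_of_poly P0 = 1 + (fps_X - 1) * J"
      by (simp add: P0_def J_def fps_of_poly_add fps_of_poly_mult fps_of_poly_diff fps_of_poly_monom')
    also have "\<dots> = (1 - fps_X) * (E - J)" using E1 by (simp add: algebra_simps)
    also have "E - J = I" using IJ by (simp add: algebra_simps)
    finally show ?thesis .
  qed
  have "semigroup_poly S = P0"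
    unfolding semigroup_poly_def
  proof (rule the_equality)
    show "fps_of_poly P0 = (1 - fps_X) * Abs_fps (\<lambda>n. if n \<in> S then 1 else 0)"
      using fP0 by (simp add: I_def)
    fix p :: "int poly"
    assume "fps_of_poly p = (1 - fps_X) * Abs_fps (\<lambda>n. if n \<in> S then 1 else 0)"
    then have "fps_of_poly p = fps_of_poly P0" using fP0 by (simp add: I_def)
    then show "p = P0" by (simp add: fps_of_poly_eq_iff)
  qed
  then show ?thesis by (simp add: P0_def Gp_def gaps_def)
qed

lemma sp_vals:
  assumes ns: "numerical_semigroup S"
  shows "poly (semigroup_poly S) 1 = 1" "poly (semigroup_poly S) 0 = 1"
proof -
  have fin: "finite (UNIV - S)" using ns by (simp add: numerical_semigroup_def)
  have z: "0 \<in> S" using ns by (simp add: numerical_semigroup_def)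
  show "poly (semigroup_poly S) 1 = 1" by (simp add: sp_eq[OF ns] poly_monom)
  have "poly (\<Sum>g\<in>UNIV - S. monom (1::int) g) 0 = (\<Sum>g\<in>UNIV - S. 0 ^ g)"
    by (simp add: poly_sum poly_monom)
  also have "\<dots> = 0"
  proof (intro sum.neutral ballI)
    fix x assume "x \<in> UNIV - S"
    then have "x \<notin> S" by simp
    then have "x \<noteq> 0" using z by metis
    then show "(0::int) ^ x = 0" by simp
  qed
  finally show "poly (semigroup_poly S) 0 = 1" by (simp add: sp_eq[OF ns] poly_monom)
qed

lemma poly_mpi_of_int: "poly (map_poly (of_int :: int \<Rightarrow> complex) p) (of_int x) = of_int (poly p x)"
  by (induction p rule: pCons_induct) (simp_all add: mpi_pCons)

lemma monom1_minus1: "[:-1, 1:] = monom (1::'a::comm_ring_1) 1 - 1"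
  by (rule poly_eqI) (simp add: coeff_pCons coeff_monom split: nat.splits)

lemma telescope: "(monom (1::'a::comm_ring_1) 1 - 1) * (\<Sum>i<n. monom 1 i) = monom 1 n - 1"
proof (induction n)
  case 0 then show ?case by simp
next
  case (Suc n)
  have "(monom (1::'a) 1 - 1) * monom 1 n = monom 1 (Suc n) - monom 1 n"
    by (simp add: algebra_simps mult_monom)
  then show ?case using Suc by (simp add: algebra_simps)
qed

lemma lead_xp: "p > 0 \<Longrightarrow> lead_coeff (monom (1::complex) p - 1) = 1"
proof -
  assume p: "p > 0"
  have deg: "degree (monom (1::complex) p - 1) = p"
  proof (rule antisym)
    show "degree (monom (1::complex) p - 1) \<le> p" by (rule degree_le) (auto simp: coeff_monom)
    show "p \<le> degree (monom (1::complex) p - 1)" by (rule le_degree) (use p in \<open>simp add: coeff_monom\<close>)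
  qed
  then show ?thesis using p by (simp add: coeff_monom)
qed

lemma order_xp:
  assumes p: "p > 0"
  shows "order z (monom (1::complex) p - 1) = (if z ^ p = 1 then 1 else 0)"
proof (cases "z ^ p = 1")
  case True
  have nz: "monom (1::complex) p - 1 \<noteq> 0" using lead_xp[OF p] by force
  have r: "poly (monom (1::complex) p - 1) z = 0" using True by (simp add: poly_monom)
  have z0: "z \<noteq> 0" using True p by (auto simp: power_0_left)
  have "order z (pderiv (monom (1::complex) p - 1)) = 0"
    by (rule order_0I) (use z0 p in \<open>simp add: pderiv_diff pderiv_monom poly_monom\<close>)
  then show ?thesis using order_pderiv[OF nz r] True by simp
next
  case False
  then show ?thesis by (simp add: order_0I poly_monom)
qed

lemma cyclo_prime:
  assumes p: "prime p"
  shows "cyclo p = map_poly of_int (\<Sum>i<p. monom 1 i)"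
proof -
  have p0: "p > 0" using p by (simp add: prime_gt_0_nat)
  have p1: "p > 1" using prime_gt_1_nat[OF p] by simp
  have char: "z ^ p = 1 \<longleftrightarrow> z = 1 \<or> z \<in> prim p" for z :: complex
  proof
    assume zp: "z ^ p = 1"
    obtain j where j: "j < p" "z = cis (2 * pi * real j / real p)" using root_unity_cis[OF zp p0] by blast
    show "z = 1 \<or> z \<in> prim p"
    proof (cases "j = 0")
      case True then show ?thesis using j by simp
    next
      case False
      have "coprime j p"
      proof -
        have "\<not> p dvd j" using False j(1) by (auto dest: dvd_imp_le)
        then have "coprime p j" using p by (simp add: prime_imp_coprime)
        then show ?thesis by (simp add: coprime_commute)
      qed
      then have "j \<in> K p" using False j(1) by (simp add: K_def)
      then show ?thesis using j(2) by (auto simp: prim_def)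
    qed
  next
    assume "z = 1 \<or> z \<in> prim p"
    then show "z ^ p = 1"
    proof
      assume "z \<in> prim p"
      then obtain k where "z = cis (2 * pi * real k / real p)" by (auto simp: prim_def)
      then show ?thesis using p0 by (simp add: cis_pow_d)
    qed simp
  qed
  have one_notin: "1 \<notin> prim p"
  proof
    assume "1 \<in> prim p"
    then obtain k where k: "k \<in> K p" "cis (2 * pi * real k / real p) = 1" by (auto simp: prim_def)
    then have "p dvd k" using cis_eq1[of p k] p0 by simp
    moreover have "1 \<le> k" "k \<le> p" "coprime k p" using k(1) by (auto simp: K_def)
    ultimately have "k = p" by (metis dvd_imp_le le_antisym not_one_le_zero le_0_eq neq0_conv)
    then show False using \<open>coprime k p\<close> p1 by simp
  qed
  have eq: "[:-1, 1:] * cyclo p = monom 1 p - 1"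
  proof (rule eq_by_orders)
    show "lead_coeff ([:-1, 1:] * cyclo p) = 1" unfolding lead_coeff_mult lead_cyclo by simp
    show "lead_coeff (monom (1::complex) p - 1) = 1" by (rule lead_xp[OF p0])
    fix z :: complex
    have l0: "[:-1, 1:] \<noteq> (0::complex poly)" by simp
    have nz: "[:-1, 1:] * cyclo p \<noteq> 0" using cyclo_nz[of p] l0 by (metis mult_eq_0_iff)
    have o1: "order z [:-1, 1:] = (if z = 1 then 1 else 0)"
    proof (cases "z = 1")
      case True then show ?thesis using order_power_n_n[of 1 1] by simp
    next
      case False then show ?thesis by (simp add: order_0I)
    qed
    have "order z ([:-1, 1:] * cyclo p) = order z [:-1, 1:] + order z (cyclo p)"
      by (rule order_mult[OF nz])
    also have "\<dots> = (if z ^ p = 1 then 1 else 0)"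
      using o1 order_cyclo[OF p0, of z] char[of z] one_notin by auto
    also have "\<dots> = order z (monom 1 p - 1)" by (simp add: order_xp[OF p0])
    finally show "order z ([:-1, 1:] * cyclo p) = order z (monom 1 p - 1)" .
  qed
  have mU: "map_poly of_int (\<Sum>i<p. monom 1 i) = (\<Sum>i<p. monom (1::complex) i)"
    by (simp add: mpi_sum mpi_monom)
  have eq2: "[:-1, 1:] * map_poly of_int (\<Sum>i<p. monom 1 i) = (monom 1 p - 1 :: complex poly)"
    unfolding mU monom1_minus1 by (rule telescope)
  have "[:-1, 1:] * cyclo p = [:-1, 1:] * map_poly of_int (\<Sum>i<p. monom 1 i)" using eq eq2 by simp
  moreover have l0: "[:-1, 1:] \<noteq> (0::complex poly)" by simp
  ultimately show ?thesis using mult_left_cancel[OF l0] by blast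
qed


theorem lemma3:
  fixes S :: "nat set"
  assumes "cyclotomic_semigroup S"
  shows "\<exists>D :: nat set. \<exists>e :: nat \<Rightarrow> nat. finite D \<and> (\<forall>d\<in>D. d > 0 \<and> e d > 0) \<and>
           map_poly of_int (semigroup_poly S) = (\<Prod>d\<in>D. cyclo d ^ e d) \<and>
           (\<forall>d\<in>D. composite d)"
proof -
  have ns: "numerical_semigroup S" and kp: "kronecker_poly (semigroup_poly S)"
    using assms by (simp_all add: cyclotomic_semigroup_def)
  define P where "P = semigroup_poly S"
  define f :: "complex poly" where "f = map_poly of_int P"
  have Plead: "lead_coeff P = 1" using kp by (simp add: kronecker_poly_def P_def)
  have disc: "\<And>z. poly f z = 0 \<Longrightarrow> norm z \<le> 1" using kp by (simp add: kronecker_poly_def P_def f_def)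
  have P0: "P \<noteq> 0" using Plead by auto
  have flead: "lead_coeff f = 1" using Plead by (simp add: f_def mpi_lead)
  have f0: "f \<noteq> 0" using flead by auto
  have fints: "\<And>i. coeff f i \<in> \<int>" by (simp add: f_def coeff_map_poly)
  have f1: "poly f 1 = 1"
    using poly_mpi_of_int[of P 1] sp_vals(1)[OF ns] by (simp add: f_def P_def)
  have fz: "poly f 0 = 1"
    using poly_mpi_of_int[of P 0] sp_vals(2)[OF ns] by (simp add: f_def P_def)
  have rep: "\<exists>d k. d > 0 \<and> 1 \<le> k \<and> k \<le> d \<and> coprime k d \<and> z = cis (2 * pi * real k / real d)"
    if z0: "poly f z = 0" for z
  proof -
    have fz': "poly f 0 \<noteq> 0" using fz by simp
    obtain n where "n > 0" "z ^ n = 1" using kronecker[OF flead fints fz' disc z0] by auto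
    then show ?thesis using root_unity_rep by blast
  qed
  define Ok where "Ok d k z \<longleftrightarrow> d > 0 \<and> k \<in> K d \<and> z = cis (2 * pi * real k / real d)" for d k z
  define \<phi> where "\<phi> z = (SOME d. \<exists>k. Ok d k z)" for z
  have \<phi>: "\<exists>k. Ok (\<phi> z) k z" if "poly f z = 0" for z
  proof -
    from rep[OF that] have "\<exists>d k. Ok d k z" by (auto simp: Ok_def K_def)
    then show ?thesis unfolding \<phi>_def by (rule someI_ex)
  qed
  define R where "R = {z. poly f z = 0}"
  define D where "D = \<phi> ` R"
  define e where "e d = order (cis (2 * pi * real 1 / real d)) f" for d
  have finR: "finite R" unfolding R_def using f0 by (rule poly_roots_finite)
  have finD: "finite D" unfolding D_def using finR by simp
  have INV: "order z f = e d" if "Ok d k z" for d k z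
  proof -
    from that have d: "d > 0" and kK: "k \<in> K d" and z: "z = cis (2 * pi * real k / real d)"
      by (auto simp: Ok_def)
    have k1: "1 \<le> k" and cop: "coprime k d" using kK by (auto simp: K_def)
    define \<eta> where "\<eta> = cis (2 * pi * real 1 / real d)"
    have \<eta>d: "\<eta> ^ d = 1" unfolding \<eta>_def by (rule cis_pow_d[OF d])
    have z\<eta>: "\<eta> ^ k = z" unfolding \<eta>_def cis_pow z by simp
    have le1: "order \<eta> f \<le> order z f"
      using order_pow_coprime[OF d \<eta>d cop P0] by (simp add: f_def z\<eta>)
    obtain x y where xy: "k * x = d * y + gcd k d" using bezout_nat[of k d] k1 by auto
    then have xy1: "k * x = d * y + 1" using cop by simp
    have copx: "coprime x d"
    proof (rule coprimeI)
      fix c assume c: "c dvd x" "c dvd d"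
      then have "c dvd k * x" by simp
      moreover have "c dvd d * y" using c by simp
      ultimately have "c dvd (k * x - d * y)" by (rule dvd_diff_nat)
      then show "is_unit c" using xy1 by simp
    qed
    have zd: "z ^ d = 1"
    proof -
      have "z ^ d = (\<eta> ^ d) ^ k" unfolding z\<eta>[symmetric] by (simp add: power_mult[symmetric] mult.commute)
      then show ?thesis using \<eta>d by simp
    qed
    have zx: "z ^ x = \<eta>"
    proof -
      have "z ^ x = \<eta> ^ (k * x)" unfolding z\<eta>[symmetric] by (simp add: power_mult)
      also have "\<dots> = (\<eta> ^ d) ^ y * \<eta>" by (simp add: xy1 power_add power_mult)
      finally show ?thesis using \<eta>d by simp
    qed
    have le2: "order z f \<le> order \<eta> f"
      using order_pow_coprime[OF d zd copx P0] by (simp add: f_def zx)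
    show ?thesis using le1 le2 by (simp add: e_def \<eta>_def)
  qed
  have Dprops: "d > 0 \<and> e d > 0" if dD: "d \<in> D" for d
  proof -
    obtain z0 where z0: "z0 \<in> R" "d = \<phi> z0" using dD by (auto simp: D_def)
    obtain k0 where ok: "Ok d k0 z0" using \<phi>[of z0] z0 by (auto simp: R_def)
    then have "e d = order z0 f" by (simp add: INV)
    moreover have "order z0 f > 0" using z0(1) f0 by (simp add: R_def order_root)
    ultimately show ?thesis using ok by (simp add: Ok_def)
  qed
  have prim_sub: "prim d \<subseteq> R" if dD: "d \<in> D" for d
  proof
    fix w assume "w \<in> prim d"
    then obtain k where k: "k \<in> K d" "w = cis (2 * pi * real k / real d)" by (auto simp: prim_def)
    then have ok: "Ok d k w" using Dprops[OF dD] by (simp add: Ok_def)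
    have "order w f > 0" using INV[OF ok] Dprops[OF dD] by simp
    then show "w \<in> R" using f0 by (simp add: R_def order_root)
  qed
  have Qeq: "f = (\<Prod>d\<in>D. cyclo d ^ e d)"
  proof (rule eq_by_orders[OF flead])
    show "lead_coeff (\<Prod>d\<in>D. cyclo d ^ e d) = 1" by (simp add: lead_coeff_prod lead_coeff_power lead_cyclo)
    fix z
    have "order z (\<Prod>d\<in>D. cyclo d ^ e d) = (\<Sum>d\<in>D. e d * order z (cyclo d))"
      by (rule order_prod_pow[OF finD cyclo_nz])
    also have "\<dots> = (\<Sum>d\<in>D. e d * (if z \<in> prim d then 1 else 0))"
      by (intro sum.cong refl) (simp add: order_cyclo Dprops)
    finally have oQ: "order z (\<Prod>d\<in>D. cyclo d ^ e d) = (\<Sum>d\<in>D. e d * (if z \<in> prim d then 1 else 0))" .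
    show "order z f = order z (\<Prod>d\<in>D. cyclo d ^ e d)"
    proof (cases "z \<in> R")
      case True
      define d0 where "d0 = \<phi> z"
      obtain k0 where ok: "Ok d0 k0 z" using \<phi> True by (auto simp: R_def d0_def)
      have d0D: "d0 \<in> D" using True by (simp add: D_def d0_def)
      have iff: "z \<in> prim d \<longleftrightarrow> d = d0" if dD: "d \<in> D" for d
      proof
        assume "z \<in> prim d"
        then obtain k where k: "k \<in> K d" "z = cis (2 * pi * real k / real d)" by (auto simp: prim_def)
        show "d = d0"
          by (rule cis_rep_unique[of d d0 k k0])
             (use k ok Dprops[OF dD] in \<open>auto simp: Ok_def K_def\<close>)
      next
        assume "d = d0"
        then show "z \<in> prim d" using ok by (auto simp: prim_def Ok_def)
      qed
      have "(\<Sum>d\<in>D. e d * (if z \<in> prim d then 1 else 0)) = (\<Sum>d\<in>D. if d = d0 then e d else 0)"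
        by (intro sum.cong refl) (simp add: iff)
      also have "\<dots> = e d0" using finD d0D by (simp add: sum.delta)
      finally show ?thesis using oQ INV[OF ok] by simp
    next
      case False
      have "order z f = 0" using False by (simp add: R_def order_0I)
      moreover have "(\<Sum>d\<in>D. e d * (if z \<in> prim d then 1 else 0)) = 0"
        using prim_sub False by (intro sum.neutral) auto
      ultimately show ?thesis using oQ by simp
    qed
  qed
  have comp: "composite d" if dD: "d \<in> D" for d
  proof -
    have d0: "d > 0" and ed: "e d > 0" using Dprops[OF dD] by auto
    have d1: "d \<noteq> 1"
    proof
      assume d1: "d = 1"
      have "1 \<in> K 1" by (simp add: K_def)
      then have "cis (2 * pi * real 1 / real 1) \<in> prim 1" unfolding prim_def by (rule imageI)
      moreover have "cis (2 * pi * real 1 / real 1) = 1" by (rule iffD2[OF cis_eq1]) auto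
      ultimately have "(1::complex) \<in> R" using prim_sub dD d1 by auto
      then show False using f1 by (simp add: R_def)
    qed
    have np: "\<not> prime d"
    proof
      assume pd: "prime d"
      have "cyclo d dvd cyclo d ^ e d" using ed by (simp add: dvd_power)
      also have "\<dots> dvd (\<Prod>d\<in>D. cyclo d ^ e d)" by (rule dvd_prodI[OF finD dD])
      finally have "cyclo d dvd f" using Qeq by simp
      then obtain W where W: "f = cyclo d * W" by (auto elim: dvdE)
      define U :: "int poly" where "U = (\<Sum>i<d. monom 1 i)"
      have cU: "cyclo d = map_poly of_int U" using cyclo_prime[OF pd] by (simp add: U_def)
      have Ulead: "lead_coeff U = 1"
      proof -
        have "(of_int (lead_coeff U) :: complex) = lead_coeff (map_poly of_int U)" by (simp add: mpi_lead)
        also have "\<dots> = 1" using lead_cyclo[of d] cU by simp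
        finally show ?thesis by simp
      qed
      have "map_poly of_int P = map_poly of_int U * W" using W cU by (simp add: f_def)
      from monic_div_int[OF Ulead this] obtain W' where W': "P = U * W'" by blast
      have "poly P 1 = poly U 1 * poly W' 1" by (simp add: W')
      moreover have "poly P 1 = 1" using sp_vals(1)[OF ns] by (simp add: P_def)
      moreover have "poly U 1 = int d" by (simp add: U_def poly_sum poly_monom)
      ultimately have "int d * poly W' 1 = 1" by simp
      then have "int d dvd 1" by (metis dvd_triv_left)
      then have "d = 1" by simp
      then show False using pd by simp
    qed
    show ?thesis using d0 d1 np by (simp add: composite_def)
  qed
  show ?thesis
    using finD Dprops Qeq comp by (intro exI[of _ D] exI[of _ e]) (simp add: f_def P_def)
qed


end
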